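(* Let $I$ be an ideal of a ring $R$. Then $R$ is uniquely weakly $I$-clean if and only if $R/I$ is semi Boolean and idempotents can be lifted uniquely weakly modulo $I$.
   Context: All rings are associative with identity; $Idem(R)$ is the set of idempotents of $R$. $R$ is uniquely weakly $I$-clean if for every $x\in R$ there exists a unique $e\in Idem(R)$ such that $x-e\in I$ or $x+e\in I$. A ring $A$ is semi Boolean if for every $x\in A$, $x^2=x$ or $x^2=-x$. Idempotents can be lifted uniquely weakly modulo $I$ if for every $x\in R$ with $x^2-x\in I$ there exists a unique $e\in Idem(R)$ with $x-e\in I$ or $x+e\in I$. *)

theory Defs
  imports "HOL-Algebra.Algebra"
begin

definition Idem_ring :: "('a, 'b) ring_scheme \<Rightarrow> 'a set" where
  "Idem_ring R = {e \<in> carrier R. monoid.mult R e e = e}"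

definition uniquely_weakly_I_clean :: "('a, 'b) ring_scheme \<Rightarrow> 'a set \<Rightarrow> bool" where
  "uniquely_weakly_I_clean R I \<longleftrightarrow>
     (\<forall>x \<in> carrier R. \<exists>!e. e \<in> Idem_ring R \<and> (a_minus R x e \<in> I \<or> add R x e \<in> I))"

definition semi_boolean :: "('a, 'b) ring_scheme \<Rightarrow> bool" where
  "semi_boolean A \<longleftrightarrow>
     (\<forall>x \<in> carrier A. monoid.mult A x x = x \<or> monoid.mult A x x = a_inv A x)"

definition idempotents_lift_uniquely_weakly :: "('a, 'b) ring_scheme \<Rightarrow> 'a set \<Rightarrow> bool" where
  "idempotents_lift_uniquely_weakly R I \<longleftrightarrow>
     (\<forall>x \<in> carrier R. a_minus R (monoid.mult R x x) x \<in> I \<longrightarrow>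
        (\<exists>!e. e \<in> Idem_ring R \<and> (a_minus R x e \<in> I \<or> add R x e \<in> I)))"

end

theory Submission
  imports Defs
begin

lemma aux:
  fixes R (structure) and I :: "'a set"
  assumes "ring R" and "ideal I R"
  defines "h \<equiv> (\<lambda>x. I +> x)" and "Q \<equiv> R Quot I"
  shows "ring Q"
    and "\<And>x. x \<in> carrier R \<Longrightarrow> h x \<in> carrier Q"
    and "\<And>Xq. Xq \<in> carrier Q \<Longrightarrow> \<exists>x\<in>carrier R. Xq = h x"
    and "\<And>x y. x \<in> carrier R \<Longrightarrow> y \<in> carrier R \<Longrightarrow> h (x \<otimes> y) = h x \<otimes>\<^bsub>Q\<^esub> h y"
    and "\<And>x. x \<in> carrier R \<Longrightarrow> h (\<ominus> x) = \<ominus>\<^bsub>Q\<^esub> h x"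
    and "\<And>x y. x \<in> carrier R \<Longrightarrow> y \<in> carrier R \<Longrightarrow> (x \<ominus> y \<in> I) = (h x = h y)"
    and "\<And>x y. x \<in> carrier R \<Longrightarrow> y \<in> carrier R \<Longrightarrow> (x \<oplus> y \<in> I) = (h x = \<ominus>\<^bsub>Q\<^esub> h y)"
proof -
  interpret R: ring R by fact
  interpret I: ideal I R by fact
  interpret H: ring_hom_ring R Q h
    unfolding h_def Q_def by (rule I.rcos_ring_hom_ring)
  show "ring Q" unfolding Q_def by (rule I.quotient_is_ring)
  show hc: "\<And>x. x \<in> carrier R \<Longrightarrow> h x \<in> carrier Q" by simp
  show "\<And>Xq. Xq \<in> carrier Q \<Longrightarrow> \<exists>x\<in>carrier R. Xq = h x"
    unfolding Q_def h_def FactRing_def A_RCOSETS_def RCOSETS_def a_r_coset_def by auto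
  show "\<And>x y. x \<in> carrier R \<Longrightarrow> y \<in> carrier R \<Longrightarrow> h (x \<otimes> y) = h x \<otimes>\<^bsub>Q\<^esub> h y" by simp
  show hi: "\<And>x. x \<in> carrier R \<Longrightarrow> h (\<ominus> x) = \<ominus>\<^bsub>Q\<^esub> h x" by simp
  have eq: "(x \<ominus> y \<in> I) = (h x = h y)" if "x \<in> carrier R" "y \<in> carrier R" for x y
  proof
    assume "x \<ominus> y \<in> I"
    then have "x \<in> I +> y" using I.a_rcos_module_minus[OF R.ring_axioms that(2,1)] by simp
    then show "h x = h y" unfolding h_def using I.a_repr_independence' that by metis
  next
    assume "h x = h y"
    then have "x \<in> I +> y" unfolding h_def using I.a_repr_independenceD that by metis
    then show "x \<ominus> y \<in> I" using I.a_rcos_module_minus[OF R.ring_axioms that(2,1)] by simp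
  qed
  show "\<And>x y. x \<in> carrier R \<Longrightarrow> y \<in> carrier R \<Longrightarrow> (x \<ominus> y \<in> I) = (h x = h y)" by (rule eq)
  show "\<And>x y. x \<in> carrier R \<Longrightarrow> y \<in> carrier R \<Longrightarrow> (x \<oplus> y \<in> I) = (h x = \<ominus>\<^bsub>Q\<^esub> h y)"
  proof -
    fix x y assume c: "x \<in> carrier R" "y \<in> carrier R"
    have "x \<oplus> y = x \<ominus> (\<ominus> y)" using c by (simp add: R.minus_eq)
    then show "(x \<oplus> y \<in> I) = (h x = \<ominus>\<^bsub>Q\<^esub> h y)" using eq[of x "\<ominus> y"] c hi by simp
  qed
qed

theorem mainTheorem7:
  fixes R (structure) and I :: "'a set"
  assumes "ring R" and "ideal I R"
  shows "uniquely_weakly_I_clean R I \<longleftrightarrow>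
           semi_boolean (R Quot I) \<and> idempotents_lift_uniquely_weakly R I"
proof -
  interpret R: ring R by fact
  define h where "h = (\<lambda>x. I +> x)"
  define Q where "Q = R Quot I"
  note A = aux[OF assms, folded h_def Q_def]
  interpret Q: ring Q by (rule A(1))
  have idem: "e \<in> Idem_ring R \<longleftrightarrow> e \<in> carrier R \<and> e \<otimes> e = e" for e
    unfolding Idem_ring_def by simp
  show ?thesis
  proof
    assume C: "uniquely_weakly_I_clean R I"
    have "semi_boolean Q"
      unfolding semi_boolean_def
    proof
      fix Xq assume Xq: "Xq \<in> carrier Q"
      then obtain x where x: "x \<in> carrier R" "Xq = h x" using A(3) by blast
      then obtain e where e: "e \<in> carrier R" "e \<otimes> e = e" "x \<ominus> e \<in> I \<or> x \<oplus> e \<in> I"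
        using C unfolding uniquely_weakly_I_clean_def idem by blast
      have he: "h e \<otimes>\<^bsub>Q\<^esub> h e = h e" using A(4)[of e e] e by simp
      have hec: "h e \<in> carrier Q" using A(2) e by simp
      from e(3) have "h x = h e \<or> h x = \<ominus>\<^bsub>Q\<^esub> h e" using A(6,7) x e by blast
      then show "Xq \<otimes>\<^bsub>Q\<^esub> Xq = Xq \<or> Xq \<otimes>\<^bsub>Q\<^esub> Xq = \<ominus>\<^bsub>Q\<^esub> Xq"
      proof
        assume "h x = h e" then show ?thesis using x he by simp
      next
        assume "h x = \<ominus>\<^bsub>Q\<^esub> h e"
        then show ?thesis using x he hec by (simp add: Q.l_minus Q.r_minus Q.minus_minus)
      qed
    qed
    moreover have "idempotents_lift_uniquely_weakly R I"
      using C unfolding uniquely_weakly_I_clean_def idempotents_lift_uniquely_weakly_def by blast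
    ultimately show "semi_boolean (R Quot I) \<and> idempotents_lift_uniquely_weakly R I"
      unfolding Q_def by simp
  next
    assume "semi_boolean (R Quot I) \<and> idempotents_lift_uniquely_weakly R I"
    then have S: "semi_boolean Q" and L: "idempotents_lift_uniquely_weakly R I"
      unfolding Q_def by auto
    show "uniquely_weakly_I_clean R I"
      unfolding uniquely_weakly_I_clean_def
    proof
      fix x assume x: "x \<in> carrier R"
      have hx: "h x \<in> carrier Q" using A(2) x by simp
      have mul: "h (x \<otimes> x) = h x \<otimes>\<^bsub>Q\<^esub> h x" using A(4) x by simp
      from S hx have "h x \<otimes>\<^bsub>Q\<^esub> h x = h x \<or> h x \<otimes>\<^bsub>Q\<^esub> h x = \<ominus>\<^bsub>Q\<^esub> h x"
        unfolding semi_boolean_def by blast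
      then show "\<exists>!e. e \<in> Idem_ring R \<and> (x \<ominus> e \<in> I \<or> x \<oplus> e \<in> I)"
      proof
        assume "h x \<otimes>\<^bsub>Q\<^esub> h x = h x"
        then have "x \<otimes> x \<ominus> x \<in> I" using A(6) x mul by simp
        then show ?thesis using L x unfolding idempotents_lift_uniquely_weakly_def by blast
      next
        assume a: "h x \<otimes>\<^bsub>Q\<^esub> h x = \<ominus>\<^bsub>Q\<^esub> h x"
        have nx: "\<ominus> x \<in> carrier R" using x by simp
        have "(\<ominus> x) \<otimes> (\<ominus> x) = x \<otimes> x" using x by (simp add: R.l_minus R.r_minus)
        then have "h ((\<ominus> x) \<otimes> (\<ominus> x)) = h (\<ominus> x)" using a mul A(5) x by simp
        then have "(\<ominus> x) \<otimes> (\<ominus> x) \<ominus> (\<ominus> x) \<in> I" using A(6) nx x by simp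
        then have U: "\<exists>!e. e \<in> Idem_ring R \<and> ((\<ominus> x) \<ominus> e \<in> I \<or> (\<ominus> x) \<oplus> e \<in> I)"
          using L nx unfolding idempotents_lift_uniquely_weakly_def by blast
        have eqv: "((\<ominus> x) \<ominus> e \<in> I \<or> (\<ominus> x) \<oplus> e \<in> I) = (x \<ominus> e \<in> I \<or> x \<oplus> e \<in> I)"
          if e: "e \<in> carrier R" for e
        proof -
          have he: "h e \<in> carrier Q" using A(2) e by simp
          have "((\<ominus> x) \<ominus> e \<in> I) = (\<ominus>\<^bsub>Q\<^esub> h x = h e)" using A(6)[OF nx e] A(5)[OF x] by simp
          also have "\<dots> = (h x = \<ominus>\<^bsub>Q\<^esub> h e)" using hx he by (metis Q.minus_minus)
          also have "\<dots> = (x \<oplus> e \<in> I)" using A(7)[OF x e] by simp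
          finally have 1: "((\<ominus> x) \<ominus> e \<in> I) = (x \<oplus> e \<in> I)" .
          have "((\<ominus> x) \<oplus> e \<in> I) = (\<ominus>\<^bsub>Q\<^esub> h x = \<ominus>\<^bsub>Q\<^esub> h e)" using A(7)[OF nx e] A(5)[OF x] by simp
          also have "\<dots> = (h x = h e)" using hx he by (metis Q.minus_minus)
          also have "\<dots> = (x \<ominus> e \<in> I)" using A(6)[OF x e] by simp
          finally show ?thesis using 1 by blast
        qed
        show ?thesis
        proof -
          from U obtain e where e1: "e \<in> Idem_ring R" "(\<ominus> x) \<ominus> e \<in> I \<or> (\<ominus> x) \<oplus> e \<in> I"
            and e2: "\<And>f. f \<in> Idem_ring R \<and> ((\<ominus> x) \<ominus> f \<in> I \<or> (\<ominus> x) \<oplus> f \<in> I) \<Longrightarrow> f = e"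
            by blast
          have ec: "\<And>f. f \<in> Idem_ring R \<Longrightarrow> f \<in> carrier R" using idem by blast
          show ?thesis
            apply (rule ex1I[of _ e])
            using e1 eqv ec apply blast
            using e2 eqv ec by blast
        qed
      qed
    qed
  qed
qed

end
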